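(* Let $F$ be an algebraically closed field, $m\geq 2$, $\beta=(m+\sqrt{m^2-4})/2$, and let $\mathbf d=(d_1,d_2)$ and $\mathbf e=(e_1,e_2)\neq(0,0)$ be pairs of non-negative integers with $\mathbf e\leq\mathbf d$ componentwise. If $d_2>\beta d_1$ and $\mathbf e\hookrightarrow\mathbf d$ (for the quiver $K(m)$), then $e_2>\beta e_1$.
   Context: $K(m)$ is the quiver with two vertices $1,2$ and $m$ arrows from $1$ to $2$; a representation of dimension vector $(d_1,d_2)$ is a tuple of linear maps $f_1,\ldots,f_m:V_1\to V_2$ with $\dim V_i=d_i$, and a subrepresentation of dimension vector $(e_1,e_2)$ is a pair of subspaces $U_1\subset V_1,U_2\subset V_2$ of dimensions $e_1,e_2$ with $f_k(U_1)\subset U_2$ for all $k$. One writes $\mathbf e\hookrightarrow\mathbf d$ if every representation of dimension vector $\mathbf d$ (equivalently, a general one, in the Zariski topology on the affine space of such representations) admits a subrepresentation of dimension vector $\mathbf e$. *)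

theory Defs
  imports Complex_Main "HOL-Library.Function_Algebras"
begin

class alg_closed_field = field +
  assumes alg_closed: "0 < n \<Longrightarrow> c n \<noteq> 0 \<Longrightarrow> \<exists>x. (\<Sum>i\<le>n. c i * x ^ i) = 0"

text \<open>The coordinate space F^n, realised as functions nat => F vanishing from index n on.
  Vector space structure: pointwise addition, scalar multiplication below.\<close>
definition fscale :: "'a::field \<Rightarrow> (nat \<Rightarrow> 'a) \<Rightarrow> (nat \<Rightarrow> 'a)" where
  "fscale c v = (\<lambda>i. c * v i)"

definition coord_space :: "nat \<Rightarrow> (nat \<Rightarrow> 'a::field) set" where
  "coord_space n = {v. \<forall>i\<ge>n. v i = 0}"

text \<open>A linear map F^p -> F^q given by a q x p matrix A (entries A i j, i<q, j<p).\<close>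
definition mat_apply :: "nat \<Rightarrow> nat \<Rightarrow> (nat \<Rightarrow> nat \<Rightarrow> 'a::field) \<Rightarrow> (nat \<Rightarrow> 'a) \<Rightarrow> (nat \<Rightarrow> 'a)" where
  "mat_apply q p A v = (\<lambda>i. if i < q then (\<Sum>j<p. A i j * v j) else 0)"

definition subspace_of_dim :: "nat \<Rightarrow> nat \<Rightarrow> (nat \<Rightarrow> 'a::field) set \<Rightarrow> bool" where
  "subspace_of_dim n e U \<longleftrightarrow> U \<subseteq> coord_space n \<and> module.subspace fscale U
      \<and> vector_space.dim fscale U = e"

text \<open>A representation of K(m) of dimension vector (d1,d2): m matrices f k (k<m), each d2 x d1.
  It has a subrepresentation of dimension vector (e1,e2).\<close>
definition has_subrep :: "nat \<Rightarrow> nat \<times> nat \<Rightarrow> (nat \<Rightarrow> nat \<Rightarrow> nat \<Rightarrow> 'a::field) \<Rightarrow> nat \<times> nat \<Rightarrow> bool" where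
  "has_subrep m d f e \<longleftrightarrow>
     (\<exists>U1 U2. subspace_of_dim (fst d) (fst e) U1 \<and> subspace_of_dim (snd d) (snd e) U2 \<and>
        (\<forall>k<m. \<forall>u\<in>U1. mat_apply (snd d) (fst d) (f k) u \<in> U2))"

text \<open>e \<hookrightarrow> d for K(m) over the field 'a: every representation of dimension vector d
  has a subrepresentation of dimension vector e.  Only the entries f k i j with k<m,
  i<d2, j<d1 matter.\<close>
definition embeds :: "'a::field itself \<Rightarrow> nat \<Rightarrow> nat \<times> nat \<Rightarrow> nat \<times> nat \<Rightarrow> bool" where
  "embeds _ m e d \<longleftrightarrow> (\<forall>f :: nat \<Rightarrow> nat \<Rightarrow> nat \<Rightarrow> 'a. has_subrep m d f e)"

end

theory Submission
  imports Defs
begin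


lemma fscale_vs: "vector_space (fscale :: 'a::field \<Rightarrow> (nat \<Rightarrow> 'a) \<Rightarrow> (nat \<Rightarrow> 'a))"
  by unfold_locales (auto simp: fscale_def fun_eq_iff algebra_simps)

interpretation V: vector_space "fscale :: 'a::field \<Rightarrow> (nat \<Rightarrow> 'a) \<Rightarrow> (nat \<Rightarrow> 'a)"
  by (rule fscale_vs)

interpretation VP: vector_space_pair "fscale :: 'a::field \<Rightarrow> (nat \<Rightarrow> 'a) \<Rightarrow> (nat \<Rightarrow> 'a)"
   "fscale :: 'a::field \<Rightarrow> (nat \<Rightarrow> 'a) \<Rightarrow> (nat \<Rightarrow> 'a)"
  by unfold_locales

lemma fscale_apply[simp]: "fscale c v i = c * v i"
  by (simp add: fscale_def)

lemma sum_fun_apply: "(\<Sum>x\<in>A. f x) i = (\<Sum>x\<in>A. f x i)" for f :: "'b \<Rightarrow> nat \<Rightarrow> 'a::comm_monoid_add"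
  by (induction A rule: infinite_finite_induct) auto

lemma test: "V.subspace (coord_space n :: (nat \<Rightarrow> 'a::field) set)"
  unfolding V.subspace_def coord_space_def by auto



abbreviation lin :: "((nat \<Rightarrow> 'a::field) \<Rightarrow> (nat \<Rightarrow> 'a)) \<Rightarrow> bool" where
  "lin f \<equiv> Vector_Spaces.linear fscale fscale f"

abbreviation fspan :: "(nat \<Rightarrow> 'a::field) set \<Rightarrow> bool" where
  "fspan S \<equiv> (\<exists>W. finite W \<and> S \<subseteq> V.span W)"

lemma basis_fin:
  fixes S :: "(nat \<Rightarrow> 'a::field) set"
  assumes "fspan S"
  obtains B where "B \<subseteq> S" "V.independent B" "S \<subseteq> V.span B" "card B = V.dim S" "finite B"
proof -
  obtain W where W: "finite W" "S \<subseteq> V.span W" using assms by blast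
  obtain B where B: "B \<subseteq> S" "V.independent B" "S \<subseteq> V.span B" "card B = V.dim S"
    using V.basis_exists by blast
  have "finite B" using V.independent_span_bound[OF W(1) B(2)] B(1) W(2) by blast
  then show ?thesis using B that by blast
qed

lemma dim_le_dim:
  fixes S T :: "(nat \<Rightarrow> 'a::field) set"
  assumes "S \<subseteq> V.span T" "fspan T"
  shows "V.dim S \<le> V.dim T"
proof -
  obtain B where B: "B \<subseteq> T" "V.independent B" "T \<subseteq> V.span B" "card B = V.dim T" "finite B"
    using basis_fin[OF assms(2)] by blast
  have "S \<subseteq> V.span B" using assms(1) B(3)
    by (metis V.span_mono V.span_span order_trans)
  then show ?thesis using V.dim_le_card[OF _ B(5)] B(4) by simp
qed

lemma card_le_dim:
  fixes B S :: "(nat \<Rightarrow> 'a::field) set"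
  assumes "V.independent B" "B \<subseteq> S" "fspan S"
  shows "card B \<le> V.dim S"
proof -
  obtain D where D: "D \<subseteq> S" "V.independent D" "S \<subseteq> V.span D" "card D = V.dim S" "finite D"
    using basis_fin[OF assms(3)] by blast
  show ?thesis using V.independent_span_bound[OF D(5) assms(1)] assms(2) D by auto
qed

lemma fspan_image:
  fixes f :: "(nat \<Rightarrow> 'a::field) \<Rightarrow> (nat \<Rightarrow> 'a)"
  assumes "lin f" "fspan S"
  shows "fspan (f ` S)"
proof -
  obtain W where W: "finite W" "S \<subseteq> V.span W" using assms by blast
  have "f ` S \<subseteq> V.span (f ` W)" using W(2) VP.linear_span_image[OF assms(1), of W] by auto
  then show ?thesis using W(1) by blast
qed

lemma dim_image_le:
  fixes f :: "(nat \<Rightarrow> 'a::field) \<Rightarrow> (nat \<Rightarrow> 'a)"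
  assumes "lin f" "fspan S"
  shows "V.dim (f ` S) \<le> V.dim S"
proof -
  obtain D where D: "D \<subseteq> S" "V.independent D" "S \<subseteq> V.span D" "card D = V.dim S" "finite D"
    using basis_fin[OF assms(2)] by blast
  have "f ` S \<subseteq> V.span (f ` D)" using D(3) VP.linear_span_image[OF assms(1), of D] by auto
  then have "V.dim (f ` S) \<le> card (f ` D)" using V.dim_le_card D(5) by blast
  also have "\<dots> \<le> card D" using card_image_le D(5) by blast
  finally show ?thesis using D(4) by simp
qed

lemma rank_nullity_le:
  fixes f :: "(nat \<Rightarrow> 'a::field) \<Rightarrow> (nat \<Rightarrow> 'a)"
  assumes f: "lin f" and S: "V.subspace S" "fspan S"
  shows "V.dim S \<le> V.dim (f ` S) + V.dim {x\<in>S. f x = 0}"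
proof -
  let ?N = "{x\<in>S. f x = 0}"
  have "fspan ?N" using S(2) by blast
  then obtain B0 where B0: "B0 \<subseteq> ?N" "V.independent B0" "?N \<subseteq> V.span B0" "card B0 = V.dim ?N" "finite B0"
    using basis_fin by blast
  obtain E where E: "E \<subseteq> f ` S" "V.independent E" "f ` S \<subseteq> V.span E" "card E = V.dim (f ` S)" "finite E"
    using basis_fin[OF fspan_image[OF f S(2)]] by blast
  have "\<forall>e\<in>E. \<exists>x\<in>S. f x = e" using E(1) by blast
  then obtain s where s: "\<And>e. e \<in> E \<Longrightarrow> s e \<in> S \<and> f (s e) = e" by metis
  let ?P = "s ` E"
  have fP: "f ` ?P = E" using s by force
  have PS: "V.span ?P \<subseteq> S" using s S(1) by (intro V.span_minimal) auto
  have "S \<subseteq> V.span (B0 \<union> ?P)"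
  proof
    fix x assume x: "x \<in> S"
    have "f x \<in> V.span E" using x E(3) by blast
    also have "V.span E = f ` V.span ?P" using VP.linear_span_image[OF f, of ?P] fP by simp
    finally obtain y where y: "y \<in> V.span ?P" "f x = f y" by blast
    have "y \<in> S" using y PS by blast
    then have "x - y \<in> ?N" using x y VP.linear_diff[OF f] V.subspace_diff[OF S(1)] by auto
    then have "x - y \<in> V.span (B0 \<union> ?P)" using B0(3) V.span_mono[of B0 "B0 \<union> ?P"] by blast
    moreover have "y \<in> V.span (B0 \<union> ?P)" using y V.span_mono[of ?P "B0 \<union> ?P"] by blast
    ultimately have "x - y + y \<in> V.span (B0 \<union> ?P)" by (rule V.span_add)
    then show "x \<in> V.span (B0 \<union> ?P)" by simp
  qed
  then have "V.dim S \<le> card (B0 \<union> ?P)" using V.dim_le_card B0(5) E(5) by blast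
  also have "\<dots> \<le> card B0 + card ?P" by (rule card_Un_le)
  also have "\<dots> \<le> card B0 + card E" using card_image_le E(5) by simp
  finally show ?thesis using B0(4) E(4) by simp
qed

lemma dim_zero_le:
  fixes S :: "(nat \<Rightarrow> 'a::field) set"
  assumes "S \<subseteq> {0}" shows "V.dim S = 0"
proof -
  have "S \<subseteq> V.span {}" using assms by simp
  then show ?thesis using V.dim_le_card[of S "{}"] by simp
qed

lemma indep_union_proj:
  fixes A B :: "(nat \<Rightarrow> 'a::field) set"
  assumes A: "V.independent A" "finite A" and B: "V.independent B" "finite B"
    and p: "lin p" "\<And>a. a \<in> A \<Longrightarrow> p a = 0" "\<And>b. b \<in> B \<Longrightarrow> p b = b"
  shows "V.independent (A \<union> B) \<and> A \<inter> B = {}"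
proof
  show disj: "A \<inter> B = {}"
  proof (rule ccontr)
    assume "A \<inter> B \<noteq> {}"
    then obtain v where "v \<in> A" "v \<in> B" by blast
    then have "v = 0" using p by metis
    then show False using \<open>v \<in> A\<close> A V.dependent_zero by blast
  qed
  show "V.independent (A \<union> B)"
  proof
    assume "V.dependent (A \<union> B)"
    then obtain u where u: "\<exists>v\<in>A \<union> B. u v \<noteq> 0" "(\<Sum>v\<in>A \<union> B. fscale (u v) v) = 0"
      using V.dependent_finite A(2) B(2) by blast
    have split: "(\<Sum>v\<in>A \<union> B. fscale (u v) v) = (\<Sum>v\<in>A. fscale (u v) v) + (\<Sum>v\<in>B. fscale (u v) v)"
      using sum.union_disjoint[OF A(2) B(2) disj] by simp
    have "p (\<Sum>v\<in>A \<union> B. fscale (u v) v) = (\<Sum>v\<in>B. fscale (u v) v)"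
      unfolding split using p
      by (simp add: VP.linear_add[OF p(1)] VP.linear_sum[OF p(1)] VP.linear_scale[OF p(1)])
    then have sB: "(\<Sum>v\<in>B. fscale (u v) v) = 0" using u(2) VP.linear_0[OF p(1)] by simp
    then have uB: "\<forall>v\<in>B. u v = 0" using V.dependent_finite B by blast
    have "(\<Sum>v\<in>A. fscale (u v) v) = 0" using u(2) split sB by simp
    then have uA: "\<forall>v\<in>A. u v = 0" using V.dependent_finite A by blast
    show False using u(1) uA uB by blast
  qed
qed



definition unitv :: "nat \<Rightarrow> nat \<Rightarrow> 'a::field" where
  "unitv j = (\<lambda>i. if i = j then 1 else 0)"

lemma coord_subspace: "V.subspace (coord_space n :: (nat \<Rightarrow> 'a::field) set)"
  unfolding V.subspace_def coord_space_def by auto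

lemma unitv_inj: "inj (unitv :: nat \<Rightarrow> nat \<Rightarrow> 'a::field)"
  by (auto simp: inj_on_def unitv_def fun_eq_iff)

lemma sum_unitv_apply: "finite J \<Longrightarrow> (\<Sum>j\<in>J. fscale (c j) (unitv j :: nat \<Rightarrow> 'a::field)) i = (if i \<in> J then c i else 0)"
proof -
  have "\<And>j. c j * (if i = j then 1 else 0) = (if i = j then c j else 0)" by simp
  then show "finite J \<Longrightarrow> ?thesis" by (simp add: sum_fun_apply unitv_def)
qed

lemma unitv_indep: "V.independent ((unitv :: nat \<Rightarrow> nat \<Rightarrow> 'a::field) ` J)"
proof
  assume "V.dependent ((unitv :: nat \<Rightarrow> nat \<Rightarrow> 'a::field) ` J)"
  then obtain T u v where T: "finite T" "T \<subseteq> unitv ` J" "v \<in> T" "u v \<noteq> 0" "(\<Sum>v\<in>T. fscale (u v) v) = (0 :: nat \<Rightarrow> 'a)"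
    by (force simp: V.dependent_explicit)
  obtain I where I: "I \<subseteq> J" "T = unitv ` I" using T(2) subset_image_iff by metis
  have fI: "finite I" using T(1) I(2) unitv_inj finite_image_iff by (metis inj_on_subset subset_UNIV)
  have "(\<Sum>v\<in>T. fscale (u v) v) = (\<Sum>j\<in>I. fscale (u (unitv j)) (unitv j :: nat \<Rightarrow> 'a))"
    unfolding I(2) by (rule sum.reindex_cong[where l=unitv]) (auto intro: inj_on_subset[OF unitv_inj])
  moreover obtain j where j: "j \<in> I" "v = unitv j" using I(2) T(3) by blast
  ultimately have "(\<Sum>j\<in>I. fscale (u (unitv j)) (unitv j :: nat \<Rightarrow> 'a)) j = 0" using T(5) by simp
  then show False using sum_unitv_apply[OF fI, of "\<lambda>j. u (unitv j)" j] j T(4) by simp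
qed

lemma coord_expand:
  assumes "v \<in> coord_space n"
  shows "v = (\<Sum>j<n. fscale (v j) (unitv j :: nat \<Rightarrow> 'a::field))"
  using assms by (auto simp: fun_eq_iff sum_unitv_apply coord_space_def)

lemma coord_span: "coord_space n = V.span ((unitv :: nat \<Rightarrow> nat \<Rightarrow> 'a::field) ` {..<n})"
proof
  show "coord_space n \<subseteq> V.span ((unitv :: nat \<Rightarrow> nat \<Rightarrow> 'a::field) ` {..<n})"
  proof
    fix v :: "nat \<Rightarrow> 'a" assume "v \<in> coord_space n"
    then have "v = (\<Sum>j<n. fscale (v j) (unitv j))" by (rule coord_expand)
    also have "\<dots> \<in> V.span (unitv ` {..<n})"
      by (intro V.span_sum V.span_scale V.span_base) auto
    finally show "v \<in> V.span (unitv ` {..<n})" .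
  qed
  show "V.span ((unitv :: nat \<Rightarrow> nat \<Rightarrow> 'a::field) ` {..<n}) \<subseteq> coord_space n"
    by (rule V.span_minimal[OF _ coord_subspace]) (auto simp: coord_space_def unitv_def)
qed

lemma coord_fspan: "fspan (coord_space n :: (nat \<Rightarrow> 'a::field) set)"
  using coord_span[where 'a='a] by blast

lemma fspan_sub: "S \<subseteq> coord_space n \<Longrightarrow> fspan (S :: (nat \<Rightarrow> 'a::field) set)"
  using coord_span[where 'a='a, of n] by blast

lemma dim_coord: "V.dim (coord_space n :: (nat \<Rightarrow> 'a::field) set) = n"
proof -
  have "card ((unitv :: nat \<Rightarrow> nat \<Rightarrow> 'a) ` {..<n}) = V.dim (coord_space n :: (nat \<Rightarrow> 'a::field) set)"
    by (rule V.basis_card_eq_dim) (auto simp: coord_span[where 'a='a] V.span_superset unitv_indep)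
  moreover have "card ((unitv :: nat \<Rightarrow> nat \<Rightarrow> 'a) ` {..<n}) = n"
    using card_image[OF inj_on_subset[OF unitv_inj[where 'a='a] subset_UNIV], of "{..<n}"] by simp
  ultimately show ?thesis by simp
qed

lemma Phi_exists:
  fixes K :: "(nat \<Rightarrow> 'a::field) set"
  assumes K: "V.subspace K" "K \<subseteq> coord_space n" and nb: "n \<le> V.dim K + b"
  shows "\<exists>\<Phi>. lin \<Phi> \<and> \<Phi> ` coord_space n \<subseteq> coord_space b \<and> (\<forall>x\<in>coord_space n. \<Phi> x = 0 \<longrightarrow> x \<in> K)"
proof -
  obtain B0 where B0: "B0 \<subseteq> K" "V.independent B0" "K \<subseteq> V.span B0" "card B0 = V.dim K" "finite B0"
    using basis_fin[OF fspan_sub[OF K(2)]] by blast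
  obtain B1 where B1: "B0 \<subseteq> B1" "B1 \<subseteq> coord_space n" "V.independent B1" "coord_space n \<subseteq> V.span B1"
    using V.maximal_independent_subset_extend[of B0 "coord_space n"] B0 K(2) by blast
  have cB1: "card B1 = n" using V.basis_card_eq_dim[OF B1(2) B1(4) B1(3)] dim_coord by simp
  have fB1: "finite B1" using B1(2,3) coord_fspan V.independent_span_bound by blast
  define C where "C = B1 - B0"
  have fC: "finite C" using fB1 C_def by simp
  have cC: "card C \<le> b" using cB1 B0(4) B1(1) fB1 nb card_Diff_subset[OF B0(5) B1(1)] C_def by simp
  obtain h where h: "bij_betw h C {..<card C}" using ex_bij_betw_finite_nat[OF fC]
    by (metis atLeast0LessThan)
  define g :: "(nat \<Rightarrow> 'a) \<Rightarrow> (nat \<Rightarrow> 'a)" where "g v = (if v \<in> C then unitv (h v) else 0)" for v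
  define \<Phi> where "\<Phi> = VP.construct B1 g"
  have lP: "lin \<Phi>" unfolding \<Phi>_def by (rule VP.linear_construct[OF B1(3)])
  have Pb: "\<And>v. v \<in> B1 \<Longrightarrow> \<Phi> v = g v" unfolding \<Phi>_def by (rule VP.construct_basis[OF B1(3)])
  have gb: "g v \<in> coord_space b" for v
  proof (cases "v \<in> C")
    case True
    then have "h v \<in> {..<card C}" using h unfolding bij_betw_def by blast
    then have "h v < b" using cC by simp
    then show ?thesis using True unfolding g_def coord_space_def unitv_def by auto
  qed (simp add: g_def coord_space_def)
  have img: "\<Phi> ` coord_space n \<subseteq> coord_space b"
  proof -
    have "\<Phi> ` coord_space n \<subseteq> \<Phi> ` V.span B1" using B1(4) by blast
    also have "\<dots> = V.span (\<Phi> ` B1)" using VP.linear_span_image[OF lP] by simp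
    also have "\<dots> \<subseteq> coord_space b"
      by (rule V.span_minimal[OF _ coord_subspace]) (use Pb gb in auto)
    finally show ?thesis .
  qed
  have ker: "x \<in> K" if x: "x \<in> coord_space n" "\<Phi> x = 0" for x
  proof -
    have "B1 = B0 \<union> C" using B1(1) C_def by blast
    then have "x \<in> V.span (B0 \<union> C)" using x B1(4) by blast
    then obtain y z where yz: "x = y + z" "y \<in> V.span B0" "z \<in> V.span C"
      unfolding V.span_Un by blast
    have "\<Phi> y = 0"
      by (rule VP.linear_eq_0_on_span[OF lP _ yz(2)]) (use Pb B1(1) g_def C_def in auto)
    then have Pz: "\<Phi> z = 0" using x yz VP.linear_add[OF lP] by simp
    have PC: "\<Phi> ` C = unitv ` h ` C" using Pb g_def C_def by (force simp: image_image)
    have "inj_on \<Phi> C"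
    proof (rule inj_onI)
      fix u v assume "u \<in> C" "v \<in> C" "\<Phi> u = \<Phi> v"
      then have "unitv (h u) = (unitv (h v) :: nat \<Rightarrow> 'a)" using Pb g_def C_def by auto
      then have "h u = h v" using unitv_inj by (metis injD)
      then show "u = v" using h \<open>u \<in> C\<close> \<open>v \<in> C\<close> by (metis bij_betw_inv_into_left)
    qed
    then have "z = 0"
      using VP.linear_indep_image_lemma[OF lP fC _ _ yz(3) Pz] PC unitv_indep by metis
    then have "x \<in> V.span B0" using yz by simp
    then show "x \<in> K" using V.span_minimal[OF B0(1) K(1)] by blast
  qed
  show ?thesis using lP img ker by blast
qed

lemma mat_of_lin:
  fixes F :: "(nat \<Rightarrow> 'a::field) \<Rightarrow> (nat \<Rightarrow> 'a)"
  assumes F: "lin F" "F ` coord_space p \<subseteq> coord_space q" and u: "u \<in> coord_space p"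
  shows "mat_apply q p (\<lambda>i j. F (unitv j) i) u = F u"
proof -
  have "F u = F (\<Sum>j<p. fscale (u j) (unitv j))" using coord_expand[OF u] by simp
  also have "\<dots> = (\<Sum>j<p. fscale (u j) (F (unitv j)))"
    by (simp add: VP.linear_sum[OF F(1)] VP.linear_scale[OF F(1)])
  finally have Fu: "F u = (\<Sum>j<p. fscale (u j) (F (unitv j)))" .
  have "F u \<in> coord_space q" using F(2) u by blast
  then show ?thesis unfolding mat_apply_def
    by (auto simp: fun_eq_iff Fu sum_fun_apply mult.commute coord_space_def)
qed



definition shf :: "nat \<Rightarrow> nat \<Rightarrow> (nat \<Rightarrow> 'a::field) \<Rightarrow> (nat \<Rightarrow> 'a)" where
  "shf k a u = (\<lambda>i. if k * a \<le> i \<and> i < k * a + a then u (i - k * a) else 0)"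

definition blk :: "nat \<Rightarrow> nat \<Rightarrow> (nat \<Rightarrow> 'a::field) \<Rightarrow> (nat \<Rightarrow> 'a)" where
  "blk k a v = (\<lambda>j. if j < a then v (k * a + j) else 0)"

lemma lin_shf: "lin (shf k a :: (nat \<Rightarrow> 'a::field) \<Rightarrow> _)"
  by (simp add: Vector_Spaces.linear_iff fscale_vs) (auto simp: shf_def fun_eq_iff)

lemma lin_blk: "lin (blk k a :: (nat \<Rightarrow> 'a::field) \<Rightarrow> _)"
  by (simp add: Vector_Spaces.linear_iff fscale_vs) (auto simp: blk_def fun_eq_iff)

lemma blk_coord: "blk k a v \<in> coord_space a"
  by (simp add: blk_def coord_space_def)

lemma shf_coord:
  assumes "k < m" shows "shf k a u \<in> coord_space (m * a)"
proof -
  have "k * a + a \<le> m * a" using assms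
    by (metis Suc_leI add.commute mult_Suc mult_le_mono1)
  then show ?thesis by (auto simp: shf_def coord_space_def)
qed

lemma block_idx:
  fixes i j k a :: nat
  assumes "i < a" "k * a \<le> j * a + i" "j * a + i < k * a + a"
  shows "j = k"
proof (rule ccontr)
  assume "j \<noteq> k"
  then consider "j < k" | "k < j" by linarith
  then show False
  proof cases
    case 1
    then have "Suc j * a \<le> k * a" using mult_le_mono1[OF Suc_leI[OF 1], of a] by simp
    then show False using assms by simp
  next
    case 2
    then have "Suc k * a \<le> j * a" using mult_le_mono1[OF Suc_leI[OF 2], of a] by simp
    then show False using assms by simp
  qed
qed

lemma blk_shf:
  assumes "u \<in> coord_space a"
  shows "blk j a (shf k a u) = (if j = k then u else 0)"
proof (cases "j = k")
  case True
  then show ?thesis using assms by (auto simp: blk_def shf_def fun_eq_iff coord_space_def)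
next
  case False
  then show ?thesis using block_idx[of _ a k j] by (auto simp: blk_def shf_def fun_eq_iff)
qed

lemma block_div:
  fixes i k a :: nat
  assumes "0 < a"
  shows "(k * a \<le> i \<and> i < k * a + a) \<longleftrightarrow> k = i div a"
proof
  assume h: "k * a \<le> i \<and> i < k * a + a"
  have "i = (i div a) * a + i mod a" by simp
  moreover have "i mod a < a" using assms by simp
  ultimately show "k = i div a" using block_idx[of "i mod a" a k "i div a"] h by metis
next
  assume "k = i div a"
  then show "k * a \<le> i \<and> i < k * a + a" using assms
    by (metis add.commute div_times_less_eq_dividend mod_div_mult_eq mod_less_divisor nat_add_left_cancel_less)
qed

lemma decomp:
  assumes v: "v \<in> coord_space (m * a)"
  shows "v = (\<Sum>k<m. shf k a (blk k a v))"
proof (cases "a = 0")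
  case True
  then have "v = 0" using v by (auto simp: coord_space_def fun_eq_iff)
  then show ?thesis using True by (auto simp: fun_eq_iff sum_fun_apply shf_def)
next
  case False
  show ?thesis
  proof
    fix i
    have "(\<Sum>k<m. shf k a (blk k a v)) i = (\<Sum>k<m. if k = i div a then v i else 0)"
      unfolding sum_fun_apply
    proof (rule sum.cong[OF refl])
      fix k
      show "shf k a (blk k a v) i = (if k = i div a then v i else 0)"
      proof (cases "k = i div a")
        case True
        then have h: "k * a \<le> i" "i < k * a + a" using block_div[of a k i] False by auto
        then have "i - k * a < a" "k * a + (i - k * a) = i" by linarith+
        then show ?thesis using h True by (simp add: shf_def blk_def)
      next
        case F: False
        then have "\<not> (k * a \<le> i \<and> i < k * a + a)" using block_div[of a k i] False by auto
        then show ?thesis using F unfolding shf_def by auto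
      qed
    qed
    also have "\<dots> = (if i div a < m then v i else 0)" by simp
    also have "\<dots> = v i"
    proof -
      have "\<not> i div a < m \<Longrightarrow> m * a \<le> i" using False
        by (metis div_less_iff_less_mult le_less_linear mult.commute not_gr0)
      then show ?thesis using v by (auto simp: coord_space_def)
    qed
    finally show "v i = (\<Sum>k<m. shf k a (blk k a v)) i" by simp
  qed
qed

lemma shf_inj_on:
  "inj_on (shf k a) (coord_space a :: (nat \<Rightarrow> 'a::field) set)"
  by (rule inj_on_inverseI[where g="blk k a"]) (simp add: blk_shf)

lemma Q_indep:
  fixes E :: "(nat \<Rightarrow> 'a::field) set"
  assumes E: "V.independent E" "finite E" "E \<subseteq> coord_space a"
  shows "V.independent (\<Union>k<j. shf k a ` E) \<and> finite (\<Union>k<j. shf k a ` E) \<and> card (\<Union>k<j. shf k a ` E) = j * card E"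
proof (induction j)
  case 0
  have e: "(\<Union>k<0. shf k a ` E) = {}" by simp
  show ?case unfolding e by (intro conjI V.independent_empty) simp_all
next
  case (Suc j)
  let ?A = "\<Union>k<j. shf k a ` E" and ?B = "shf j a ` E"
  have un: "(\<Union>k<Suc j. shf k a ` E) = ?A \<union> ?B" by (auto simp: lessThan_Suc)
  have spE: "V.span E \<subseteq> coord_space a" using E(3) V.span_minimal coord_subspace by blast
  have iB: "V.independent ?B"
    by (rule VP.linear_independent_injective_image[OF lin_shf E(1)])
      (rule inj_on_subset[OF shf_inj_on spE])
  have cB: "card ?B = card E" using card_image inj_on_subset[OF shf_inj_on E(3)] by blast
  have lp: "lin (shf j a \<circ> blk j a :: (nat \<Rightarrow> 'a) \<Rightarrow> _)"
    by (rule Vector_Spaces.linear_compose[OF lin_blk lin_shf])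
  have pA: "(shf j a \<circ> blk j a) x = 0" if "x \<in> ?A" for x
  proof -
    obtain k e where "k < j" "e \<in> E" "x = shf k a e" using \<open>x \<in> ?A\<close> by blast
    moreover have "blk j a (shf k a e) = 0" using blk_shf[of e a j k] E(3) \<open>k < j\<close> \<open>e \<in> E\<close> by auto
    ultimately show ?thesis using VP.linear_0[OF lin_shf] by auto
  qed
  have pB: "(shf j a \<circ> blk j a) x = x" if hx: "x \<in> ?B" for x
  proof -
    obtain e where "e \<in> E" "x = shf j a e" using hx by blast
    then show ?thesis using blk_shf[of e a j j] E(3) by auto
  qed
  have r: "V.independent (?A \<union> ?B) \<and> ?A \<inter> ?B = {}"
    by (rule indep_union_proj[OF conjunct1[OF Suc.IH] conjunct1[OF conjunct2[OF Suc.IH]] iB finite_imageI[OF E(2)] lp pA pB])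
  have fA: "finite ?A" using Suc.IH by blast
  have cA: "card ?A = j * card E" using Suc.IH by blast
  have "card (?A \<union> ?B) = card ?A + card ?B"
    using r fA E(2) by (intro card_Un_disjoint) auto
  then have "card (?A \<union> ?B) = Suc j * card E" using cA cB by simp
  moreover have "finite (?A \<union> ?B)" using fA E(2) by blast
  ultimately show ?case unfolding un using conjunct1[OF r] by blast
qed



definition Exp :: "nat \<Rightarrow> real \<Rightarrow> nat \<Rightarrow> nat \<Rightarrow> (nat \<Rightarrow> (nat \<Rightarrow> 'a::field) \<Rightarrow> (nat \<Rightarrow> 'a)) \<Rightarrow> bool" where
  "Exp m \<beta> a b F \<longleftrightarrow> (\<forall>k<m. lin (F k) \<and> F k ` coord_space a \<subseteq> coord_space b) \<and>
     (\<forall>W. V.subspace W \<and> W \<subseteq> coord_space a \<and> W \<noteq> {0} \<longrightarrow>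
        \<beta> * real (V.dim W) < real (V.dim (V.span (\<Union>k<m. F k ` W))))"

lemma Exp0: "Exp m \<beta> 0 a (\<lambda>k x. 0 :: nat \<Rightarrow> 'a::field)"
proof -
  have "lin (\<lambda>x. 0 :: nat \<Rightarrow> 'a)" by (rule VP.linear_zero)
  moreover have "(0 :: nat \<Rightarrow> 'a) \<in> coord_space a" by (simp add: coord_space_def)
  moreover have "W = {0}" if "V.subspace W" "W \<subseteq> (coord_space 0 :: (nat \<Rightarrow> 'a) set)" for W
    using that V.subspace_0[OF that(1)] by (auto simp: coord_space_def fun_eq_iff)
  ultimately show ?thesis unfolding Exp_def by auto
qed

lemma dim_pos:
  fixes U :: "(nat \<Rightarrow> 'a::field) set"
  assumes "V.subspace U" "U \<noteq> {0}" "fspan U"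
  shows "0 < V.dim U"
proof (rule ccontr)
  assume "\<not> 0 < V.dim U"
  then have d: "V.dim U = 0" by simp
  obtain B where B: "B \<subseteq> U" "V.independent B" "U \<subseteq> V.span B" "card B = V.dim U" "finite B"
    using basis_fin[OF assms(3)] by blast
  then have "B = {}" using d by simp
  then have "U \<subseteq> {0}" using B(3) by simp
  then show False using assms(1,2) V.subspace_0 by blast
qed

lemma subspace_pre:
  fixes U C :: "(nat \<Rightarrow> 'a::field) set"
  assumes U: "V.subspace U" and C: "V.subspace C" and h: "\<And>k. k < m \<Longrightarrow> lin (h k)"
  shows "V.subspace {v \<in> C. \<forall>k<m. h k v \<in> U}"
  unfolding V.subspace_def
proof (intro conjI ballI allI impI)
  show "0 \<in> {v \<in> C. \<forall>k<m. h k v \<in> U}"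
    using V.subspace_0[OF U] V.subspace_0[OF C] VP.linear_0[OF h] by auto
next
  fix x y assume "x \<in> {v \<in> C. \<forall>k<m. h k v \<in> U}" "y \<in> {v \<in> C. \<forall>k<m. h k v \<in> U}"
  then show "x + y \<in> {v \<in> C. \<forall>k<m. h k v \<in> U}"
    using V.subspace_add[OF U] V.subspace_add[OF C] VP.linear_add[OF h] by auto
next
  fix c x assume "x \<in> {v \<in> C. \<forall>k<m. h k v \<in> U}"
  then show "fscale c x \<in> {v \<in> C. \<forall>k<m. h k v \<in> U}"
    using V.subspace_scale[OF U] V.subspace_scale[OF C] VP.linear_scale[OF h] by auto
qed

lemma Step:
  fixes g :: "nat \<Rightarrow> (nat \<Rightarrow> 'a::field) \<Rightarrow> (nat \<Rightarrow> 'a)"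
  assumes bm: "\<beta> * (real m - \<beta>) = 1" "1 \<le> \<beta>"
    and g: "Exp m \<beta> \<kappa> a g" and kb: "m * a \<le> \<kappa> + b"
  shows "\<exists>F :: nat \<Rightarrow> (nat \<Rightarrow> 'a) \<Rightarrow> (nat \<Rightarrow> 'a). Exp m \<beta> a b F"
proof -
  have glin: "\<And>k. k < m \<Longrightarrow> lin (g k)" and gim: "\<And>k. k < m \<Longrightarrow> g k ` coord_space \<kappa> \<subseteq> coord_space a"
    using g unfolding Exp_def by auto
  have gexp: "\<And>W. V.subspace W \<Longrightarrow> W \<subseteq> coord_space \<kappa> \<Longrightarrow> W \<noteq> {0} \<Longrightarrow>
        \<beta> * real (V.dim W) < real (V.dim (V.span (\<Union>k<m. g k ` W)))"
    using g unfolding Exp_def by auto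
  define G where "G x = (\<Sum>k<m. shf k a (g k x))" for x
  have lG: "lin G" unfolding G_def
    by (rule VP.linear_compose_sum) (auto intro!: Vector_Spaces.linear_compose[OF glin lin_shf, unfolded o_def])
  have blkG: "blk k a (G x) = g k x" if "x \<in> coord_space \<kappa>" "k < m" for x k
  proof -
    have "blk k a (G x) = (\<Sum>j<m. blk k a (shf j a (g j x)))"
      unfolding G_def by (rule VP.linear_sum[OF lin_blk])
    also have "\<dots> = (\<Sum>j<m. if k = j then g j x else 0)"
    proof (rule sum.cong[OF refl])
      fix j assume "j \<in> {..<m}"
      then have "g j x \<in> coord_space a" using gim that(1) by blast
      then show "blk k a (shf j a (g j x)) = (if k = j then g j x else 0)" by (rule blk_shf)
    qed
    also have "\<dots> = g k x" using that by simp
    finally show ?thesis .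
  qed
  have Gc: "G x \<in> coord_space (m * a)" for x
    unfolding G_def by (rule V.subspace_sum[OF coord_subspace]) (simp add: shf_coord)
  define K where "K = G ` coord_space \<kappa>"
  have Ksub: "V.subspace K" unfolding K_def
    by (rule module_hom.subspace_image[OF lG[unfolded module_hom_iff_linear[symmetric]] coord_subspace])
  have Kc: "K \<subseteq> coord_space (m * a)" using Gc K_def by blast
  have ker0: "{x \<in> coord_space \<kappa>. G x = 0} \<subseteq> {0}"
  proof
    fix x assume x: "x \<in> {x \<in> coord_space \<kappa>. G x = 0}"
    show "x \<in> {0}"
    proof (rule ccontr)
      assume nz: "x \<notin> {0}"
      have gx: "g k x = 0" if "k < m" for k using blkG[of x k] x that
        by (simp add: VP.linear_0[OF lin_blk])
      let ?W = "V.span {x}"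
      have Wc: "?W \<subseteq> coord_space \<kappa>" using x V.span_minimal[OF _ coord_subspace] by blast
      have "?W \<noteq> {0}" using nz V.span_base[of x "{x}"] by auto
      then have lt: "\<beta> * real (V.dim ?W) < real (V.dim (V.span (\<Union>k<m. g k ` ?W)))"
        using gexp Wc by blast
      have "(\<Union>k<m. g k ` ?W) \<subseteq> {0}"
      proof
        fix y assume "y \<in> (\<Union>k<m. g k ` ?W)"
        then obtain k z where kz: "k < m" "z \<in> ?W" "y = g k z" by blast
        then have "y = 0" using VP.linear_eq_0_on_span[OF glin[OF kz(1)], of "{x}" z] gx[OF kz(1)] by auto
        then show "y \<in> {0}" by simp
      qed
      then have "V.dim (V.span (\<Union>k<m. g k ` ?W)) = 0" using dim_zero_le by simp
      then have "\<beta> * real (V.dim ?W) < 0" using lt by simp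
      moreover have "0 \<le> \<beta> * real (V.dim ?W)" using bm(2) by simp
      ultimately show False by linarith
    qed
  qed
  have dK: "\<kappa> \<le> V.dim K"
    using rank_nullity_le[OF lG coord_subspace coord_fspan, of \<kappa>] dim_zero_le[OF ker0]
      dim_coord[where 'a='a, of \<kappa>] K_def by simp
  obtain \<Phi> where \<Phi>: "lin \<Phi>" "\<Phi> ` coord_space (m * a) \<subseteq> coord_space b"
     "\<And>x. x \<in> coord_space (m * a) \<Longrightarrow> \<Phi> x = 0 \<Longrightarrow> x \<in> K"
    using Phi_exists[OF Ksub Kc, of b] dK kb by auto
  define F where "F k u = \<Phi> (shf k a u)" for k u
  have Flin: "lin (F k)" for k
    unfolding F_def using Vector_Spaces.linear_compose[OF lin_shf \<Phi>(1)] by (simp add: o_def)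
  have Fim: "F k ` coord_space a \<subseteq> coord_space b" if "k < m" for k
    using \<Phi>(2) shf_coord[OF that] unfolding F_def by blast
  have "Exp m \<beta> a b F"
    unfolding Exp_def
  proof (intro conjI allI impI)
    fix k show "lin (F k)" by (rule Flin)
  next
    fix k assume "k < m" then show "F k ` coord_space a \<subseteq> coord_space b"
      using Fim by blast
  next
    fix U :: "(nat \<Rightarrow> 'a) set" assume U: "V.subspace U \<and> U \<subseteq> coord_space a \<and> U \<noteq> {0}"
    have Us: "V.subspace U" and Uc: "U \<subseteq> coord_space a" and Un: "U \<noteq> {0}" using U by auto
    define e where "e = V.dim U"
    have epos: "0 < e" using dim_pos[OF Us Un fspan_sub[OF Uc]] e_def by simp
    define P where "P = {v \<in> coord_space (m * a). \<forall>k<m. blk k a v \<in> U}"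
    have Ps: "V.subspace P"
      unfolding P_def by (rule subspace_pre[OF Us coord_subspace lin_blk])
    have Pc: "P \<subseteq> coord_space (m * a)" unfolding P_def by blast
    define S where "S = V.span (\<Union>k<m. F k ` U)"
    have Sc: "S \<subseteq> coord_space b" unfolding S_def
    proof (rule V.span_minimal[OF _ coord_subspace])
      show "(\<Union>k<m. F k ` U) \<subseteq> coord_space b"
      proof
        fix y assume "y \<in> (\<Union>k<m. F k ` U)"
        then obtain k u where "k < m" "u \<in> U" "y = F k u" by blast
        then show "y \<in> coord_space b" using Fim[of k] Uc by blast
      qed
    qed
    have PS: "\<Phi> ` P \<subseteq> S"
    proof
      fix w assume "w \<in> \<Phi> ` P"
      then obtain v where v: "v \<in> P" "w = \<Phi> v" by blast
      have "v \<in> coord_space (m * a)" using v Pc by blast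
      then have "v = (\<Sum>k<m. shf k a (blk k a v))" by (rule decomp)
      then have "\<Phi> v = \<Phi> (\<Sum>k<m. shf k a (blk k a v))" by (rule arg_cong)
      also have "\<dots> = (\<Sum>k<m. F k (blk k a v))"
        unfolding F_def by (rule VP.linear_sum[OF \<Phi>(1)])
      also have "\<dots> \<in> S" unfolding S_def
      proof (rule V.span_sum)
        fix k assume "k \<in> {..<m}"
        then have "F k (blk k a v) \<in> (\<Union>k<m. F k ` U)" using v(1) unfolding P_def by blast
        then show "F k (blk k a v) \<in> V.span (\<Union>k<m. F k ` U)" by (rule V.span_base)
      qed
      finally show "w \<in> S" using v by simp
    qed
    have d1: "V.dim (\<Phi> ` P) \<le> V.dim S"
    proof (rule dim_le_dim)
      show "\<Phi> ` P \<subseteq> V.span S" using PS V.span_superset[of S] by (rule subset_trans)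
      show "fspan S" by (rule fspan_sub[OF Sc])
    qed
    obtain E where E: "E \<subseteq> U" "V.independent E" "U \<subseteq> V.span E" "card E = e" "finite E"
      using basis_fin[OF fspan_sub[OF Uc]] e_def by blast
    have Q: "V.independent (\<Union>k<m. shf k a ` E) \<and> card (\<Union>k<m. shf k a ` E) = m * e"
      using Q_indep[OF E(2) E(5)] E Uc by auto
    have QP: "(\<Union>k<m. shf k a ` E) \<subseteq> P"
    proof
      fix v assume "v \<in> (\<Union>k<m. shf k a ` E)"
      then obtain k u where ku: "k < m" "u \<in> E" "v = shf k a u" by blast
      have "blk j a v \<in> U" if "j < m" for j
      proof -
        have "u \<in> U" "u \<in> coord_space a" using ku E(1) Uc by auto
        then show ?thesis using blk_shf[of u a j k] ku V.subspace_0[OF Us] by auto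
      qed
      then show "v \<in> P" unfolding P_def using shf_coord[OF ku(1)] ku by blast
    qed
    have d2: "m * e \<le> V.dim P"
      using card_le_dim[OF conjunct1[OF Q] QP fspan_sub[OF Pc]] Q by simp
    define N where "N = {x \<in> P. \<Phi> x = 0}"
    have d3: "V.dim P \<le> V.dim (\<Phi> ` P) + V.dim N"
      unfolding N_def by (rule rank_nullity_le[OF \<Phi>(1) Ps fspan_sub[OF Pc]])
    define Wg where "Wg = {x \<in> coord_space \<kappa>. \<forall>k<m. g k x \<in> U}"
    have Wgs: "V.subspace Wg"
      unfolding Wg_def by (rule subspace_pre[OF Us coord_subspace glin])
    have Wgc: "Wg \<subseteq> coord_space \<kappa>" unfolding Wg_def by blast
    have NG: "N \<subseteq> G ` Wg"
    proof
      fix v assume "v \<in> N"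
      then have v: "v \<in> P" "\<Phi> v = 0" unfolding N_def by auto
      then have "v \<in> K" using \<Phi>(3) Pc by blast
      then obtain x where x: "x \<in> coord_space \<kappa>" "v = G x" unfolding K_def by blast
      have "g k x \<in> U" if "k < m" for k using blkG[OF x(1) that] v(1) x(2) that P_def by auto
      then show "v \<in> G ` Wg" using x Wg_def by blast
    qed
    have GWc: "G ` Wg \<subseteq> coord_space (m * a)" using Gc by blast
    have d4: "V.dim N \<le> V.dim Wg"
    proof -
      have "V.dim N \<le> V.dim (G ` Wg)"
      proof (rule dim_le_dim)
        show "N \<subseteq> V.span (G ` Wg)" using NG V.span_superset[of "G ` Wg"] by (rule subset_trans)
        show "fspan (G ` Wg)" by (rule fspan_sub[OF GWc])
      qed
      also have "\<dots> \<le> V.dim Wg" by (rule dim_image_le[OF lG fspan_sub[OF Wgc]])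
      finally show ?thesis .
    qed
    have d5: "\<beta> * real (V.dim Wg) < real e"
    proof (cases "Wg = {0}")
      case True
      then show ?thesis using dim_zero_le[of Wg] epos by simp
    next
      case False
      have "\<beta> * real (V.dim Wg) < real (V.dim (V.span (\<Union>k<m. g k ` Wg)))"
        using gexp[OF Wgs Wgc False] .
      also have "V.dim (V.span (\<Union>k<m. g k ` Wg)) \<le> V.dim U"
      proof (rule dim_le_dim)
        have "(\<Union>k<m. g k ` Wg) \<subseteq> U" unfolding Wg_def by blast
        then show "V.span (\<Union>k<m. g k ` Wg) \<subseteq> V.span U" by (rule V.span_mono)
        show "fspan U" by (rule fspan_sub[OF Uc])
      qed
      finally show ?thesis using e_def by simp
    qed
    have "\<beta> * real (V.dim N) \<le> \<beta> * real (V.dim Wg)"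
      using d4 bm(2) by (intro mult_left_mono) auto
    then have d6: "\<beta> * real (V.dim N) < real e" using d5 by linarith
    have "m * e \<le> V.dim S + V.dim N" using d1 d2 d3 by linarith
    then have "real (m * e) \<le> real (V.dim S + V.dim N)" by (simp only: of_nat_le_iff)
    then have key: "real m * real e \<le> real (V.dim S) + real (V.dim N)" by simp
    have mb: "real m - \<beta> > 0"
    proof (rule ccontr)
      assume "\<not> real m - \<beta> > 0"
      then have "\<beta> * (real m - \<beta>) \<le> 0" using bm(2) by (intro mult_nonneg_nonpos) auto
      then show False using bm(1) by simp
    qed
    have "(real m - \<beta>) * (\<beta> * real (V.dim N)) < (real m - \<beta>) * real e"
      using d6 mb by simp
    moreover have "(real m - \<beta>) * (\<beta> * real (V.dim N)) = (\<beta> * (real m - \<beta>)) * real (V.dim N)"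
      by (simp only: mult.assoc mult.commute mult.left_commute)
    ultimately have "real (V.dim N) < (real m - \<beta>) * real e"
      using bm(1) by simp
    then show "\<beta> * real (V.dim U) < real (V.dim (V.span (\<Union>k<m. F k ` U)))"
      using key e_def S_def by (simp add: algebra_simps)
  qed
  then show ?thesis by blast
qed



lemma exists_Exp:
  assumes bm: "\<beta> * (real m - \<beta>) = 1" "1 \<le> \<beta>"
  shows "real b > \<beta> * real a \<Longrightarrow> \<exists>F :: nat \<Rightarrow> (nat \<Rightarrow> 'a::field) \<Rightarrow> (nat \<Rightarrow> 'a). Exp m \<beta> a b F"
proof (induction a arbitrary: b rule: less_induct)
  case (less a)
  define \<kappa> where "\<kappa> = m * a - b"
  have kb: "m * a \<le> \<kappa> + b" unfolding \<kappa>_def by simp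
  show ?case
  proof (cases "\<kappa> = 0")
    case True
    have "Exp m \<beta> 0 a (\<lambda>k x. 0 :: nat \<Rightarrow> 'a)" by (rule Exp0)
    then show ?thesis using Step[OF bm _ kb] True by blast
  next
    case False
    then have k: "real \<kappa> = real m * real a - real b" unfolding \<kappa>_def
      by (simp add: of_nat_diff)
    have "real \<kappa> < (real m - \<beta>) * real a" using k less.prems by (simp add: algebra_simps)
    then have "\<beta> * real \<kappa> < \<beta> * ((real m - \<beta>) * real a)" using bm(2) by simp
    also have "\<dots> = real a" using bm(1) by (simp only: mult.assoc[symmetric])
    finally have ka: "\<beta> * real \<kappa> < real a" .
    moreover have "real \<kappa> \<le> \<beta> * real \<kappa>" using bm(2) by (simp add: mult_le_cancel_right1)
    ultimately have "\<kappa> < a" by linarith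
    then obtain g :: "nat \<Rightarrow> (nat \<Rightarrow> 'a) \<Rightarrow> (nat \<Rightarrow> 'a)" where "Exp m \<beta> \<kappa> a g"
      using less.IH[of \<kappa> a] ka by blast
    then show ?thesis using Step[OF bm _ kb] by blast
  qed
qed

theorem lemma3p3:
  fixes m :: nat and d e :: "nat \<times> nat"
  assumes "m \<ge> 2"
    and "e \<noteq> (0, 0)"
    and "fst e \<le> fst d" and "snd e \<le> snd d"
    and "real (snd d) > (real m + sqrt (real m ^ 2 - 4)) / 2 * real (fst d)"
    and "embeds TYPE('a::alg_closed_field) m e d"
  shows "real (snd e) > (real m + sqrt (real m ^ 2 - 4)) / 2 * real (fst e)"
proof -
  define \<beta> where "\<beta> = (real m + sqrt (real m ^ 2 - 4)) / 2"
  define s where "s = sqrt (real m ^ 2 - 4)"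
  have m2: "real m \<ge> 2" using assms(1) by simp
  have m4: "4 \<le> real m ^ 2"
  proof -
    have "2 * 2 \<le> real m * real m" using m2 by (intro mult_mono) auto
    then show ?thesis by (simp add: power2_eq_square)
  qed
  have ss: "s * s = real m ^ 2 - 4" unfolding s_def
    using real_sqrt_pow2[of "real m ^ 2 - 4"] m4 by (simp add: power2_eq_square)
  have s0: "s \<ge> 0" unfolding s_def using m4 by simp
  have b1: "1 \<le> \<beta>" unfolding \<beta>_def s_def[symmetric] using m2 s0 by simp
  have bm: "\<beta> * (real m - \<beta>) = 1" unfolding \<beta>_def s_def[symmetric]
    using ss by (simp add: field_simps power2_eq_square)
  obtain F :: "nat \<Rightarrow> (nat \<Rightarrow> 'a) \<Rightarrow> (nat \<Rightarrow> 'a)" where F: "Exp m \<beta> (fst d) (snd d) F"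
    using exists_Exp[OF bm b1, of "fst d" "snd d"] assms(5) \<beta>_def by blast
  have Flin: "\<And>k. k < m \<Longrightarrow> lin (F k)" and Fim: "\<And>k. k < m \<Longrightarrow> F k ` coord_space (fst d) \<subseteq> coord_space (snd d)"
    using F unfolding Exp_def by auto
  have Fexp: "\<And>W. V.subspace W \<Longrightarrow> W \<subseteq> coord_space (fst d) \<Longrightarrow> W \<noteq> {0} \<Longrightarrow>
        \<beta> * real (V.dim W) < real (V.dim (V.span (\<Union>k<m. F k ` W)))"
    using F unfolding Exp_def by auto
  define f :: "nat \<Rightarrow> nat \<Rightarrow> nat \<Rightarrow> 'a" where "f k i j = F k (unitv j) i" for k i j
  have "has_subrep m d f e" using assms(6) unfolding embeds_def by blast
  then obtain U1 U2 :: "(nat \<Rightarrow> 'a) set" where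
    U1: "subspace_of_dim (fst d) (fst e) U1" and U2: "subspace_of_dim (snd d) (snd e) U2"
    and inv: "\<forall>k<m. \<forall>u\<in>U1. mat_apply (snd d) (fst d) (f k) u \<in> U2"
    unfolding has_subrep_def by blast
  have U1c: "U1 \<subseteq> coord_space (fst d)" and U1s: "V.subspace U1" and U1d: "V.dim U1 = fst e"
    using U1 unfolding subspace_of_dim_def by auto
  have U2c: "U2 \<subseteq> coord_space (snd d)" and U2s: "V.subspace U2" and U2d: "V.dim U2 = snd e"
    using U2 unfolding subspace_of_dim_def by auto
  show ?thesis
  proof (cases "fst e = 0")
    case True
    then have "snd e > 0" using assms(2) by (cases e) auto
    then show ?thesis using True \<beta>_def by simp
  next
    case False
    have U1n: "U1 \<noteq> {0}"
    proof
      assume "U1 = {0}"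
      then have "V.dim U1 = 0" using dim_zero_le[of U1] by simp
      then show False using U1d False by simp
    qed
    have sub: "(\<Union>k<m. F k ` U1) \<subseteq> U2"
    proof
      fix y assume "y \<in> (\<Union>k<m. F k ` U1)"
      then obtain k u where ku: "k < m" "u \<in> U1" "y = F k u" by blast
      have "mat_apply (snd d) (fst d) (f k) u = F k u"
        unfolding f_def by (rule mat_of_lin[OF Flin[OF ku(1)] Fim[OF ku(1)]]) (use ku U1c in blast)
      then show "y \<in> U2" using inv ku by metis
    qed
    have "V.dim (V.span (\<Union>k<m. F k ` U1)) \<le> V.dim U2"
    proof (rule dim_le_dim)
      show "V.span (\<Union>k<m. F k ` U1) \<subseteq> V.span U2" using sub by (rule V.span_mono)
      show "fspan U2" by (rule fspan_sub[OF U2c])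
    qed
    then have "real (V.dim (V.span (\<Union>k<m. F k ` U1))) \<le> real (snd e)" using U2d by simp
    moreover have "\<beta> * real (fst e) < real (V.dim (V.span (\<Union>k<m. F k ` U1)))"
      using Fexp[OF U1s U1c U1n] U1d by simp
    ultimately have "\<beta> * real (fst e) < real (snd e)" by linarith
    then show ?thesis unfolding \<beta>_def .
  qed
qed

end
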